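(* Let $\mu$ be the probability measure on $\mathrm{Homeo}_+(\mathbb{R})$ giving mass $1/2$ to each of the maps \[ f_1(x)=\begin{cases}x+1,& x<0,\\ 2x+1,& x\ge 0,\end{cases}\qquad f_2(x)=x-1. \] Then $\phi_+\equiv 1$ (every point tends to $+\infty$ almost surely under the forward dynamics), while $\hat\phi_0\equiv 1$ (under the inverse dynamics, for every point the random orbit almost surely tends neither to $+\infty$ nor to $-\infty$).
   Context: Let $g_1,g_2,\dots$ be i.i.d. random maps with law $\mu$, and set $F_n=g_n\circ\cdots\circ g_1$ (forward dynamics); the inverse dynamics is the random dynamical system defined by $\hat\mu$, the image of $\mu$ under $f\mapsto f^{-1}$, with random compositions $\hat F_n$. Let $\phi_+(x)=\mathbb{P}(\lim_n F_n(x)=+\infty)$, and $\hat\phi_0(x)=1-\mathbb{P}(\lim_n\hat F_n(x)=+\infty)-\mathbb{P}(\lim_n\hat F_n(x)=-\infty)$. *)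

theory Defs
  imports "HOL-Probability.Probability"
begin

definition f1 :: "real \<Rightarrow> real" where
  "f1 x = (if x < 0 then x + 1 else 2 * x + 1)"

definition f2 :: "real \<Rightarrow> real" where
  "f2 x = x - 1"

text \<open>Underlying probability space: i.i.d. fair coins; coin k selects the (k+1)-th map.\<close>
definition coins :: "(nat \<Rightarrow> bool) measure" where
  "coins = (\<Pi>\<^sub>M k\<in>(UNIV::nat set). measure_pmf (bernoulli_pmf (1/2)))"

fun rcomp :: "(real \<Rightarrow> real) \<Rightarrow> (real \<Rightarrow> real) \<Rightarrow> (nat \<Rightarrow> bool) \<Rightarrow> nat \<Rightarrow> real \<Rightarrow> real" where
  "rcomp a b \<omega> 0 x = x"
| "rcomp a b \<omega> (Suc n) x = (if \<omega> n then a else b) (rcomp a b \<omega> n x)"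

text \<open>Forward dynamics (law mu: mass 1/2 on f1 and f2) and inverse dynamics (law hat mu:
  mass 1/2 on the inverses of f1 and f2).\<close>
definition Fwd :: "(nat \<Rightarrow> bool) \<Rightarrow> nat \<Rightarrow> real \<Rightarrow> real" where
  "Fwd = rcomp f1 f2"

definition Inv :: "(nat \<Rightarrow> bool) \<Rightarrow> nat \<Rightarrow> real \<Rightarrow> real" where
  "Inv = rcomp (inv f1) (inv f2)"

definition phi_plus :: "real \<Rightarrow> real" where
  "phi_plus x = measure coins {\<omega> \<in> space coins. filterlim (\<lambda>n. Fwd \<omega> n x) at_top sequentially}"

definition phi0_hat :: "real \<Rightarrow> real" where
  "phi0_hat x = 1
     - measure coins {\<omega> \<in> space coins. filterlim (\<lambda>n. Inv \<omega> n x) at_top sequentially}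
     - measure coins {\<omega> \<in> space coins. filterlim (\<lambda>n. Inv \<omega> n x) at_bot sequentially}"

end

theory Submission
  imports Defs "HOL-Library.Log_Nat"
begin


lemma space_coins[simp]: "space coins = UNIV"
  by (simp add: coins_def space_PiM)

interpretation C: sequence_space "measure_pmf (bernoulli_pmf (1/2))"
  by unfold_locales

lemma coins_eq: "coins = C.S" by (simp add: coins_def)

lemma prob_coins: "prob_space coins" unfolding coins_eq by (rule C.P.prob_space_axioms)

lemma f1_max: "f1 x = max (x+1) (2*x+1)" by (simp add: f1_def max_def)

lemma f1_cont: "continuous_on UNIV f1"
  unfolding f1_max[abs_def] by (intro continuous_intros)

lemma coord_meas[measurable]: "(\<lambda>\<omega>. \<omega> n) \<in> measurable coins (count_space UNIV)"
proof -
  have "(\<lambda>\<omega>. \<omega> n) \<in> measurable coins (measure_pmf (bernoulli_pmf (1/2)))"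
    unfolding coins_def by (rule measurable_component_singleton) simp
  then show ?thesis by (simp add: measurable_def)
qed

lemma meas_rcomp:
  assumes [measurable]: "a \<in> borel_measurable borel" "b \<in> borel_measurable borel"
  shows "(\<lambda>\<omega>. rcomp a b \<omega> n x) \<in> borel_measurable coins"
proof (induction n)
  case 0 then show ?case by simp
next
  case (Suc n)
  have eq: "(\<lambda>\<omega>. rcomp a b \<omega> (Suc n) x) = (\<lambda>\<omega>. if \<omega> n then a (rcomp a b \<omega> n x) else b (rcomp a b \<omega> n x))"
    by auto
  have s: "{\<omega> \<in> space coins. \<omega> n} \<in> sets coins"
    using coord_meas[of n] by (simp add: pred_def)
  show ?case unfolding eq
    by (rule measurable_If[OF measurable_compose[OF Suc] measurable_compose[OF Suc] s]) (simp_all add: assms)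
qed


lemma filterlim_at_top_nat_iff:
  "filterlim f at_top sequentially \<longleftrightarrow> (\<forall>Z::nat. \<exists>N. \<forall>n\<ge>N. real Z \<le> (f n::real))"
proof
  assume "filterlim f at_top sequentially"
  then show "\<forall>Z::nat. \<exists>N. \<forall>n\<ge>N. real Z \<le> f n"
    by (auto simp: filterlim_at_top eventually_sequentially)
next
  assume H: "\<forall>Z::nat. \<exists>N. \<forall>n\<ge>N. real Z \<le> f n"
  show "filterlim f at_top sequentially"
    unfolding filterlim_at_top eventually_sequentially
  proof
    fix Z :: real
    obtain k :: nat where "Z \<le> real k" using real_arch_simple by blast
    with H show "\<exists>N. \<forall>n\<ge>N. Z \<le> f n" by (meson order_trans)
  qed
qed

lemma filterlim_at_bot_nat_iff:
  "filterlim f at_bot sequentially \<longleftrightarrow> (\<forall>Z::nat. \<exists>N. \<forall>n\<ge>N. (f n::real) \<le> - real Z)"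
proof
  assume "filterlim f at_bot sequentially"
  then show "\<forall>Z::nat. \<exists>N. \<forall>n\<ge>N. f n \<le> - real Z"
    by (auto simp: filterlim_at_bot eventually_sequentially)
next
  assume H: "\<forall>Z::nat. \<exists>N. \<forall>n\<ge>N. f n \<le> - real Z"
  show "filterlim f at_bot sequentially"
    unfolding filterlim_at_bot eventually_sequentially
  proof
    fix Z :: real
    obtain k :: nat where "- Z \<le> real k" using real_arch_simple by blast
    with H show "\<exists>N. \<forall>n\<ge>N. f n \<le> Z" by (smt (verit))
  qed
qed

lemma meas_at_top:
  fixes G :: "(nat \<Rightarrow> bool) \<Rightarrow> nat \<Rightarrow> real"
  assumes [measurable]: "\<And>n. (\<lambda>\<omega>. G \<omega> n) \<in> borel_measurable coins"
  shows "{\<omega> \<in> space coins. filterlim (G \<omega>) at_top sequentially} \<in> sets coins"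
proof -
  have "Measurable.pred coins (\<lambda>\<omega>. \<forall>Z::nat. \<exists>N::nat. \<forall>n\<ge>N. real Z \<le> G \<omega> n)"
    by measurable
  then show ?thesis unfolding filterlim_at_top_nat_iff by (simp add: pred_def)
qed

lemma meas_at_bot:
  fixes G :: "(nat \<Rightarrow> bool) \<Rightarrow> nat \<Rightarrow> real"
  assumes [measurable]: "\<And>n. (\<lambda>\<omega>. G \<omega> n) \<in> borel_measurable coins"
  shows "{\<omega> \<in> space coins. filterlim (G \<omega>) at_bot sequentially} \<in> sets coins"
proof -
  have "Measurable.pred coins (\<lambda>\<omega>. \<forall>Z::nat. \<exists>N::nat. \<forall>n\<ge>N. G \<omega> n \<le> - real Z)"
    by measurable
  then show ?thesis unfolding filterlim_at_bot_nat_iff by (simp add: pred_def)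
qed

abbreviation "B \<equiv> measure_pmf (bernoulli_pmf (1/2))"

lemma case_meas: "(\<lambda>(s,\<omega>). case_nat s \<omega>) \<in> measurable (B \<Otimes>\<^sub>M coins) coins"
  unfolding coins_def by measurable

lemma case_meas1: "(\<lambda>\<omega>. case_nat s \<omega>) \<in> measurable coins coins"
  unfolding coins_def by measurable

lemma split_measure:
  assumes A: "A \<in> sets coins"
  shows "measure coins A = (measure coins {\<omega>. case_nat True \<omega> \<in> A} + measure coins {\<omega>. case_nat False \<omega> \<in> A}) / 2"
proof -
  interpret P: prob_space coins by (rule prob_coins)
  have "emeasure coins A = emeasure (distr (B \<Otimes>\<^sub>M coins) coins (\<lambda>(s,\<omega>). case_nat s \<omega>)) A"
    using C.PiM_iter by (simp add: coins_def)
  also have "\<dots> = emeasure (B \<Otimes>\<^sub>M coins) ((\<lambda>(s,\<omega>). case_nat s \<omega>) -` A \<inter> space (B \<Otimes>\<^sub>M coins))"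
    by (rule emeasure_distr[OF case_meas A])
  also have "\<dots> = \<integral>\<^sup>+ s. emeasure coins (Pair s -` ((\<lambda>(s,\<omega>). case_nat s \<omega>) -` A \<inter> space (B \<Otimes>\<^sub>M coins))) \<partial>B"
    by (rule P.emeasure_pair_measure_alt) (rule measurable_sets[OF case_meas A])
  also have "\<dots> = \<integral>\<^sup>+ s. emeasure coins {\<omega>. case_nat s \<omega> \<in> A} \<partial>B"
    by (intro nn_integral_cong arg_cong[where f="emeasure coins"]) (auto simp: space_pair_measure)
  also have "\<dots> = ennreal (1/2) * emeasure coins {\<omega>. case_nat True \<omega> \<in> A} + ennreal (1/2) * emeasure coins {\<omega>. case_nat False \<omega> \<in> A}"
    by (simp add: nn_integral_measure_pmf nn_integral_count_space_finite UNIV_bool)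
  finally have e: "emeasure coins A = ennreal (1/2) * emeasure coins {\<omega>. case_nat True \<omega> \<in> A} + ennreal (1/2) * emeasure coins {\<omega>. case_nat False \<omega> \<in> A}" .
  have s: "{\<omega>. case_nat s \<omega> \<in> A} \<in> sets coins" for s
    using measurable_sets[OF case_meas1 A] by (simp add: vimage_def)
  define mT where "mT = measure coins {\<omega>. case_nat True \<omega> \<in> A}"
  define mF where "mF = measure coins {\<omega>. case_nat False \<omega> \<in> A}"
  have "ennreal (1/2 * mT + 1/2 * mF) = ennreal (1/2 * mT) + ennreal (1/2 * mF)"
    by (rule ennreal_plus) (simp_all add: mT_def mF_def)
  also have "\<dots> = ennreal (1/2) * ennreal mT + ennreal (1/2) * ennreal mF"
    by (subst (1 2) ennreal_mult) (simp_all add: mT_def mF_def)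
  also have "\<dots> = ennreal (measure coins A)"
    using e by (simp add: P.emeasure_eq_measure s A mT_def mF_def)
  finally have "1/2 * mT + 1/2 * mF = measure coins A"
    by (subst (asm) ennreal_inj) (simp_all add: mT_def mF_def)
  then show ?thesis by (simp add: mT_def mF_def)
qed



lemma f1_neg: "x < 0 \<Longrightarrow> f1 x = x + 1" by (simp add: f1_def)
lemma f1_nonneg: "x \<ge> 0 \<Longrightarrow> f1 x = 2*x + 1" by (simp add: f1_def)

lemma harmonic_one:
  fixes p :: "real \<Rightarrow> real"
  assumes mono: "\<And>x y. x \<le> y \<Longrightarrow> p x \<le> p y" and le1: "\<And>x. p x \<le> 1" and ge0: "\<And>x. 0 \<le> p x"
    and harm: "\<And>x. p x = (p (f1 x) + p (f2 x))/2"
    and sup: "\<And>e. e > 0 \<Longrightarrow> \<exists>X. p X \<ge> 1 - e"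
  shows "p x = 1"
proof -
  have h1: "p y = (p (y+1) + p (y-1))/2" if "y < 0" for y
    using harm[of y] that by (simp add: f1_neg f2_def)
  have d1: "p (x - real n + 1) - p (x - real n) = p (x+1) - p x" if "x < 0" for x n
  proof (induction n)
    case 0 then show ?case by simp
  next
    case (Suc n)
    have "x - real n < 0" using that by simp
    from h1[OF this] have "p (x - real n) - p (x - real n - 1) = p (x - real n + 1) - p (x - real n)" by simp
    then show ?case using Suc by (simp add: algebra_simps)
  qed
  have d2: "p (x+1) - p (x - real n) = (real n + 1) * (p (x+1) - p x)" if "x < 0" for x n
  proof (induction n)
    case 0 then show ?case by simp
  next
    case (Suc n)
    have "p (x+1) - p (x - real (Suc n)) = (p (x+1) - p (x - real n)) + (p (x - real n) - p (x - real n - 1))"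
      using arg_cong[of "x - real (Suc n)" "x - real n - 1" p] by simp
    also have "p (x - real n) - p (x - real n - 1) = p (x+1) - p x"
      using d1[OF that, of "Suc n"] by (simp add: algebra_simps)
    finally show ?case using Suc by (simp add: algebra_simps)
  qed
  have step: "p (x+1) = p x" if "x < 0" for x
  proof (rule ccontr)
    assume "p (x+1) \<noteq> p x"
    moreover have "p x \<le> p (x+1)" by (rule mono) simp
    ultimately have d: "p (x+1) - p x > 0" by simp
    obtain n :: nat where "1 / (p (x+1) - p x) < real n" using reals_Archimedean2 by blast
    then have "1 < real n * (p (x+1) - p x)" using d by (simp add: field_simps)
    also have "\<dots> \<le> (real n + 1) * (p (x+1) - p x)" using d by (simp add: algebra_simps)
    also have "\<dots> = p (x+1) - p (x - real n)" using d2[OF that] by simp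
    also have "\<dots> \<le> 1" using le1[of "x+1"] ge0[of "x - real n"] by simp
    finally show False by simp
  qed
  have pm1: "p (-1) = p 0" using step[of "-1"] by simp
  have pow: "p (2^k - 1) = p 0" for k :: nat
  proof (induction k)
    case 0 then show ?case by simp
  next
    case (Suc k)
    define a :: real where "a = 2^k - 1"
    have a0: "a \<ge> 0" unfolding a_def by simp
    have pa: "p a = p 0" using Suc by (simp add: a_def)
    have "p (a - 1) \<le> p a" by (rule mono) simp
    moreover have "p (-1) \<le> p (a - 1)" by (rule mono) (use a0 in simp)
    ultimately have pa1: "p (a - 1) = p 0" using pa pm1 by simp
    have "p a = (p (2*a+1) + p (a - 1))/2" using harm[of a] a0 by (simp add: f1_nonneg f2_def)
    then have "p (2*a+1) = p 0" using pa pa1 by simp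
    moreover have "2*a+1 = 2^(Suc k) - 1" by (simp add: a_def)
    ultimately show ?case by simp
  qed
  have kpow: "real k \<le> 2^k - 1" for k :: nat
  proof (induction k)
    case (Suc k) then show ?case by simp
  qed simp
  have all_le: "p X \<le> p 0" for X
  proof -
    obtain k :: nat where "X \<le> real k" using real_arch_simple by blast
    then have "X \<le> 2^k - 1" using kpow[of k] by simp
    then have "p X \<le> p (2^k - 1)" by (rule mono)
    then show ?thesis using pow by simp
  qed
  have p0: "p 0 = 1"
  proof (rule antisym[OF le1])
    show "1 \<le> p 0"
    proof (rule field_le_epsilon)
      fix e :: real assume "e > 0"
      then obtain X where "p X \<ge> 1 - e" using sup by blast
      then show "1 \<le> p 0 + e" using all_le[of X] by simp
    qed
  qed
  have "p y = 1" if "- real n \<le> y" for n y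
    using that
  proof (induction n arbitrary: y)
    case 0
    then have "p 0 \<le> p y" by (intro mono) simp
    then show ?case using p0 le1[of y] by simp
  next
    case (Suc n)
    show ?case
    proof (cases "y < 0")
      case True
      then have "p y = p (y+1)" using step by simp
      also have "\<dots> = 1" using Suc by simp
      finally show ?thesis .
    next
      case False
      then have "p 0 \<le> p y" by (intro mono) simp
      then show ?thesis using p0 le1[of y] by simp
    qed
  qed
  moreover obtain n :: nat where "- x \<le> real n" using real_arch_simple by blast
  ultimately show ?thesis by (meson minus_le_iff)
qed



lemma rcomp_Suc': "rcomp a b \<omega> (Suc n) x = rcomp a b (\<lambda>k. \<omega> (Suc k)) n ((if \<omega> 0 then a else b) x)"
  by (induction n arbitrary: x) auto

lemma f1_meas: "f1 \<in> borel_measurable borel"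
  by (rule borel_measurable_continuous_onI[OF f1_cont])
lemma f2_meas: "f2 \<in> borel_measurable borel"
  unfolding f2_def by measurable

definition Aset :: "real \<Rightarrow> (nat \<Rightarrow> bool) set" where
  "Aset x = {\<omega> \<in> space coins. filterlim (\<lambda>n. Fwd \<omega> n x) at_top sequentially}"

lemma Aset_sets: "Aset x \<in> sets coins"
  unfolding Aset_def Fwd_def
  by (rule meas_at_top) (rule meas_rcomp[OF f1_meas f2_meas])

lemma phi_plus_Aset: "phi_plus x = measure coins (Aset x)"
  by (simp add: phi_plus_def Aset_def)

lemma Aset_case: "{\<omega>. case_nat s \<omega> \<in> Aset x} = Aset ((if s then f1 else f2) x)"
proof -
  have "Fwd (case_nat s \<omega>) (Suc n) x = Fwd \<omega> n ((if s then f1 else f2) x)" for \<omega> n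
    unfolding Fwd_def by (subst rcomp_Suc') simp
  then have "filterlim (\<lambda>n. Fwd (case_nat s \<omega>) n x) at_top sequentially \<longleftrightarrow>
      filterlim (\<lambda>n. Fwd \<omega> n ((if s then f1 else f2) x)) at_top sequentially" for \<omega>
    by (subst filterlim_sequentially_Suc[symmetric]) simp
  then show ?thesis by (auto simp: Aset_def)
qed

lemma phi_plus_harm: "phi_plus x = (phi_plus (f1 x) + phi_plus (f2 x))/2"
  unfolding phi_plus_Aset using split_measure[OF Aset_sets, of x] by (simp add: Aset_case)

lemma f1_mono: "x \<le> y \<Longrightarrow> f1 x \<le> f1 y" by (simp add: f1_max max_def)

lemma Fwd_mono: "x \<le> y \<Longrightarrow> Fwd \<omega> n x \<le> Fwd \<omega> n y"
  unfolding Fwd_def by (induction n) (auto intro: f1_mono simp: f2_def)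

lemma phi_plus_mono: "x \<le> y \<Longrightarrow> phi_plus x \<le> phi_plus y"
proof -
  assume xy: "x \<le> y"
  interpret P: prob_space coins by (rule prob_coins)
  have "Aset x \<subseteq> Aset y"
    unfolding Aset_def using Fwd_mono[OF xy]
    by (auto elim!: filterlim_at_top_mono simp: eventually_sequentially)
  then show ?thesis unfolding phi_plus_Aset by (intro P.finite_measure_mono Aset_sets)
qed



definition rho :: "nat \<Rightarrow> nat \<Rightarrow> nat" where "rho Q p = 2 * floorlog 2 (p + Q)"

lemma pow_ge: "L \<ge> 5 \<Longrightarrow> 2*L + 1 \<le> (2::nat)^(L-1)"
proof (induction L rule: dec_induct)
  case base then show ?case by simp
next
  case (step L)
  then have "2 * Suc L + 1 \<le> 2 * 2^(L-1)" by simp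
  also have "2 * 2^(L-1) = (2::nat)^(Suc L - 1)" using step(1)
    by (cases L) auto
  finally show ?case .
qed

lemma rho_step:
  assumes Q: "Q \<ge> 16" and m': "m' \<le> m + rho Q m + 1"
  shows "rho Q m' \<le> rho Q m + 2"
proof -
  define q where "q = m + Q"
  define L where "L = floorlog 2 q"
  have q16: "q \<ge> 16" using Q by (simp add: q_def)
  have L5: "L \<ge> 5" unfolding L_def by (rule floorlog_geI) (use q16 in simp_all)
  have bnd: "2^(L-1) \<le> q \<and> q < 2^L" unfolding L_def by (rule floorlog_bounds) (use q16 in simp_all)
  have "2*L + 1 \<le> q" using pow_ge[OF L5] bnd by linarith
  then have "m' + Q \<le> 2 * q" using m' by (simp add: rho_def q_def L_def)
  also have "\<dots> < 2^(Suc L)" using bnd by simp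
  finally have "floorlog 2 (m' + Q) \<le> Suc L" by (intro floorlog_leI) simp_all
  then show ?thesis by (simp add: rho_def L_def q_def)
qed

context
  fixes \<omega> :: "nat \<Rightarrow> bool" and Q :: nat and X :: real
  assumes Q: "Q \<ge> 16" and good: "\<forall>p. \<exists>j \<le> rho Q p. \<omega> (p+j)"
begin

abbreviation "FF n \<equiv> Fwd \<omega> n X"

lemma F_Suc: "FF (Suc n) = (if \<omega> n then f1 else f2) (FF n)"
  by (simp add: Fwd_def)

definition InvC where "InvC m \<longleftrightarrow> FF m \<ge> 2 * real (rho Q m) + 3"

lemma cycle:
  assumes "InvC m"
  obtains j where "j \<le> rho Q m" "\<And>i. i \<le> j \<Longrightarrow> FF (m+i) = FF m - real i" "\<omega> (m+j)"
proof -
  have ex: "\<exists>j. \<omega> (m+j)" using good by blast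
  define j where "j = (LEAST j. \<omega> (m+j))"
  have wj: "\<omega> (m+j)" unfolding j_def by (rule LeastI_ex[OF ex])
  have nj: "\<not> \<omega> (m+i)" if "i < j" for i using not_less_Least[of i "\<lambda>j. \<omega> (m+j)"] that by (simp add: j_def)
  obtain j0 where "j0 \<le> rho Q m" "\<omega> (m+j0)" using good by blast
  then have jle: "j \<le> rho Q m" unfolding j_def by (meson Least_le order_trans)
  have "FF (m+i) = FF m - real i" if "i \<le> j" for i
    using that
  proof (induction i)
    case 0 then show ?case by simp
  next
    case (Suc i)
    then have "\<not> \<omega> (m+i)" using nj by simp
    then show ?case using Suc by (simp add: F_Suc f2_def)
  qed
  with jle wj that show ?thesis by blast
qed

lemma cycle_next:
  assumes I: "InvC m"
  shows "\<exists>m'>m. InvC m' \<and> FF m' \<ge> FF m + 1 \<and> m' \<le> m + rho Q m + 1 \<and> (\<forall>n. m \<le> n \<and> n < m' \<longrightarrow> FF n \<ge> FF m - real (rho Q m))"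
proof -
  obtain j where j: "j \<le> rho Q m" "\<And>i. i \<le> j \<Longrightarrow> FF (m+i) = FF m - real i" "\<omega> (m+j)"
    using cycle[OF I] by blast
  have Fm: "FF m \<ge> 2 * real (rho Q m) + 3" using I by (simp add: InvC_def)
  have Fj: "FF (m+j) = FF m - real j" using j(2) by simp
  have "FF (m+j) \<ge> 0" using Fj Fm j(1) by simp
  then have Fm': "FF (Suc (m+j)) = 2 * (FF m - real j) + 1"
    using j(3) Fj by (simp add: F_Suc f1_nonneg)
  have rs: "rho Q (Suc (m+j)) \<le> rho Q m + 2" using rho_step[OF Q, of "Suc (m+j)" m] j(1) by simp
  have rs': "real (rho Q (Suc (m+j))) \<le> real (rho Q m) + 2" using rs by linarith
  have j1: "real j \<le> real (rho Q m)" using j(1) by linarith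
  have a1: "2 * (FF m - real j) + 1 \<ge> 2 * real (rho Q m) + 7" using Fm j1 by (simp add: algebra_simps)
  have "2 * real (rho Q (Suc (m+j))) + 3 \<le> 2 * real (rho Q m) + 7" using rs' by simp
  then have "InvC (Suc (m+j))" unfolding InvC_def Fm' using a1 by (rule order_trans)
  moreover have "FF (Suc (m+j)) \<ge> FF m + 1" unfolding Fm' using Fm j1 by (simp add: algebra_simps)
  moreover have "FF n \<ge> FF m - real (rho Q m)" if "m \<le> n" "n < Suc (m+j)" for n
  proof -
    define i where "i = n - m"
    have i: "n = m + i" "i \<le> j" using that by (simp_all add: i_def)
    have "real i \<le> real (rho Q m)" using i(2) j(1) by linarith
    then show ?thesis using j(2)[OF i(2)] i(1) by simp
  qed
  moreover have "Suc (m+j) > m" "Suc (m+j) \<le> m + rho Q m + 1" using j(1) by simp_all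
  ultimately show ?thesis by blast
qed

lemma stay_high:
  "InvC m \<Longrightarrow> m \<le> n \<Longrightarrow> FF n \<ge> (FF m + 3)/2"
proof (induction "n - m" arbitrary: m rule: less_induct)
  case less
  obtain m' where m': "m' > m" "InvC m'" "FF m' \<ge> FF m + 1"
    "\<forall>n. m \<le> n \<and> n < m' \<longrightarrow> FF n \<ge> FF m - real (rho Q m)"
    using cycle_next[OF less.prems(1)] by blast
  have Fm: "FF m \<ge> 2 * real (rho Q m) + 3" using less.prems(1) by (simp add: InvC_def)
  show ?case
  proof (cases "n < m'")
    case True
    then have "FF n \<ge> FF m - real (rho Q m)" using m'(4) less.prems(2) by blast
    then show ?thesis using Fm by simp
  next
    case False
    then have le: "m' \<le> n" by simp
    have lt: "n - m' < n - m" using le m'(1) by simp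
    have "FF n \<ge> (FF m' + 3)/2" by (rule less.hyps[OF lt m'(2) le])
    then show ?thesis using m'(3) by simp
  qed
qed

lemma grow: "InvC m \<Longrightarrow> \<exists>m'. InvC m' \<and> FF m' \<ge> FF m + real k"
proof (induction k)
  case 0 then show ?case by auto
next
  case (Suc k)
  then obtain m' where "InvC m'" "FF m' \<ge> FF m + real k" by blast
  then obtain m'' where "InvC m''" "FF m'' \<ge> FF m' + 1" using cycle_next by blast
  then show ?case using \<open>FF m' \<ge> FF m + real k\<close> by (intro exI[of _ m'']) simp
qed

lemma escape:
  assumes X: "X \<ge> 2 * real (rho Q 0) + 3"
  shows "filterlim (\<lambda>n. FF n) at_top sequentially"
  unfolding filterlim_at_top eventually_sequentially
proof
  fix Z :: real
  have I0: "InvC 0" using X by (simp add: InvC_def Fwd_def)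
  obtain k :: nat where k: "2*Z - X \<le> real k" using real_arch_simple by blast
  obtain m where m: "InvC m" "FF m \<ge> FF 0 + real k" using grow[OF I0] by blast
  have "FF n \<ge> Z" if "n \<ge> m" for n
    using stay_high[OF m(1) that] m(2) k X by (simp add: Fwd_def)
  then show "\<exists>N. \<forall>n\<ge>N. Z \<le> FF n" by blast
qed

end



definition Bad :: "nat \<Rightarrow> nat \<Rightarrow> (nat \<Rightarrow> bool) set" where
  "Bad Q p = {\<omega> \<in> space coins. \<forall>j. j \<le> rho Q p \<longrightarrow> \<not> \<omega> (p+j)}"

lemma Bad_sets: "Bad Q p \<in> sets coins"
proof -
  have "Measurable.pred coins (\<lambda>\<omega>. \<forall>j. j \<le> rho Q p \<longrightarrow> \<not> \<omega> (p+j))" by measurable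
  then show ?thesis by (simp add: Bad_def pred_def)
qed

lemma Bad_measure: "measure coins (Bad Q p) = (1/2)^(rho Q p + 1)"
proof -
  let ?J = "{p..p + rho Q p}"
  have k: "(\<forall>j. j \<le> rho Q p \<longrightarrow> \<not> \<omega> (p+j)) \<longleftrightarrow> (\<forall>i\<in>?J. \<omega> i \<in> {False})" for \<omega>
  proof
    assume H: "\<forall>j. j \<le> rho Q p \<longrightarrow> \<not> \<omega> (p+j)"
    show "\<forall>i\<in>?J. \<omega> i \<in> {False}"
    proof
      fix i assume "i \<in> ?J"
      then have a: "i - p \<le> rho Q p" and b: "p + (i - p) = i" by auto
      from H a have "\<not> \<omega> (p + (i - p))" by blast
      then show "\<omega> i \<in> {False}" unfolding b by simp
    qed
  qed auto
  have eq: "Bad Q p = prod_emb UNIV (\<lambda>_. B) ?J (PiE ?J (\<lambda>_. {False}))"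
  proof (rule set_eqI)
    fix \<omega> :: "nat \<Rightarrow> bool"
    have "\<omega> \<in> prod_emb UNIV (\<lambda>_. B) ?J (PiE ?J (\<lambda>_. {False})) \<longleftrightarrow> (\<forall>i\<in>?J. \<omega> i \<in> {False})"
      by (simp only: prod_emb_iff restrict_PiE_iff) simp
    then show "\<omega> \<in> Bad Q p \<longleftrightarrow> \<omega> \<in> prod_emb UNIV (\<lambda>_. B) ?J (PiE ?J (\<lambda>_. {False}))"
      unfolding Bad_def using k by simp
  qed
  have "measure coins (Bad Q p) = (\<Prod>i\<in>?J. measure B {False})"
    unfolding eq coins_eq by (rule C.measure_PiM_emb) auto
  also have "\<dots> = (1/2)^(rho Q p + 1)"
    by (simp add: measure_pmf_single)
  finally show ?thesis .
qed

lemma lim_f: "(\<lambda>n. 1 / (real n + c)) \<longlonglongrightarrow> 0"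
proof -
  have "filterlim (\<lambda>n. c + real n) at_top sequentially"
    by (rule filterlim_tendsto_add_at_top[OF tendsto_const filterlim_real_sequentially])
  then have "filterlim (\<lambda>n. real n + c) at_top sequentially" by (simp add: add.commute)
  then have "filterlim (\<lambda>n. real n + c) at_infinity sequentially"
    by (rule filterlim_at_top_imp_at_infinity)
  then show ?thesis by (rule tendsto_divide_0[OF tendsto_const])
qed

lemma Bad_bound:
  assumes Q: "Q \<ge> 16"
  shows "(1/2::real)^(rho Q p + 1) \<le> 1 / (real p + (real Q - 1)) - 1 / (real (Suc p) + (real Q - 1))"
proof -
  define q where "q = p + Q"
  define L where "L = floorlog 2 q"
  have "q < 2^L" unfolding L_def using floorlog_bounds[of q 2] Q by (simp add: q_def)
  then have ql: "real q < 2^L" by (metis of_nat_less_iff of_nat_numeral of_nat_power)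
  have q1: "real q \<ge> 16" using Q by (simp add: q_def)
  have "(1/2::real)^(rho Q p + 1) = 1 / (2 * (2^L)^2)"
    by (simp add: rho_def L_def q_def power_one_over power_add power_mult[symmetric] mult.commute)
  also have "\<dots> \<le> 1 / ((real q - 1) * real q)"
  proof (rule divide_left_mono)
    have "(real q - 1) * real q \<le> real q * real q" using q1 by simp
    also have "\<dots> \<le> 2^L * 2^L" using ql q1 by (intro mult_mono) auto
    also have "\<dots> \<le> 2 * (2^L)^2" by (simp add: power2_eq_square)
    finally show "(real q - 1) * real q \<le> 2 * (2^L)^2" .
  qed (use q1 in auto)
  also have "\<dots> = 1 / (real q - 1) - 1 / real q"
    using q1 by (simp add: field_simps)
  also have "\<dots> = 1 / (real p + (real Q - 1)) - 1 / (real (Suc p) + (real Q - 1))"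
    by (simp add: q_def)
  finally show ?thesis .
qed

lemma good_prob:
  assumes Q: "Q \<ge> 16"
  shows "measure coins (\<Union>p. Bad Q p) \<le> 1 / (real Q - 1)"
proof -
  interpret P: prob_space coins by (rule prob_coins)
  define f where "f n = 1 / (real n + (real Q - 1))" for n
  have tel: "(\<lambda>n. f n - f (Suc n)) sums (f 0 - 0)"
    unfolding f_def by (rule telescope_sums'[OF lim_f])
  have le: "measure coins (Bad Q p) \<le> f p - f (Suc p)" for p
    unfolding Bad_measure f_def using Bad_bound[OF Q] by simp
  have nn: "0 \<le> measure coins (Bad Q p)" for p by simp
  have sm: "summable (\<lambda>p. measure coins (Bad Q p))"
    by (rule summable_comparison_test'[OF sums_summable[OF tel], of 0]) (use le in auto)
  have "measure coins (\<Union>p. Bad Q p) \<le> (\<Sum>p. measure coins (Bad Q p))"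
    by (rule P.finite_measure_subadditive_countably) (use Bad_sets sm in auto)
  also have "\<dots> \<le> (\<Sum>p. f p - f (Suc p))"
    by (rule suminf_le[OF le sm sums_summable[OF tel]])
  also have "\<dots> = f 0" using tel by (simp add: sums_iff)
  finally show ?thesis by (simp add: f_def)
qed

lemma sup_phi: "e > 0 \<Longrightarrow> \<exists>X. phi_plus X \<ge> 1 - e"
proof -
  assume e: "e > 0"
  interpret P: prob_space coins by (rule prob_coins)
  obtain n :: nat where n: "1 / e < real n" using reals_Archimedean2 by blast
  define Q where "Q = n + 17"
  have Q: "Q \<ge> 16" by (simp add: Q_def)
  have Qe: "1 / (real Q - 1) \<le> e"
  proof -
    have lt: "1 / e < real Q - 1" using n by (simp add: Q_def)
    have pos: "real Q - 1 > 0" using Q by simp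
    have "1 < e * (real Q - 1)" using lt e by (simp add: divide_less_eq mult.commute)
    then have "1 / (real Q - 1) < e" using pos by (simp add: divide_less_eq)
    then show ?thesis by simp
  qed
  define X where "X = 2 * real (rho Q 0) + 3"
  have sub: "space coins - (\<Union>p. Bad Q p) \<subseteq> Aset X"
  proof
    fix \<omega> assume w: "\<omega> \<in> space coins - (\<Union>p. Bad Q p)"
    then have good: "\<forall>p. \<exists>j \<le> rho Q p. \<omega> (p+j)" by (auto simp: Bad_def)
    have "filterlim (\<lambda>n. Fwd \<omega> n X) at_top sequentially"
      by (rule escape[OF Q good]) (simp add: X_def)
    then show "\<omega> \<in> Aset X" by (simp add: Aset_def)
  qed
  have U: "(\<Union>p. Bad Q p) \<in> sets coins" using Bad_sets by auto
  have "1 - e \<le> 1 - measure coins (\<Union>p. Bad Q p)" using good_prob[OF Q] Qe by simp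
  also have "\<dots> = measure coins (space coins - (\<Union>p. Bad Q p))"
    using P.prob_compl[OF U] by simp
  also have "\<dots> \<le> measure coins (Aset X)"
    by (rule P.finite_measure_mono[OF sub Aset_sets])
  finally show ?thesis unfolding phi_plus_Aset by blast
qed

lemma phi_plus_one: "phi_plus x = 1"
proof -
  interpret P: prob_space coins by (rule prob_coins)
  have le1: "\<And>x. phi_plus x \<le> 1" by (simp add: phi_plus_def)
  have ge0: "\<And>x. 0 \<le> phi_plus x" by (simp add: phi_plus_def)
  show ?thesis
    by (rule harmonic_one[of phi_plus, OF phi_plus_mono le1 ge0 phi_plus_harm sup_phi])
qed



lemma filterlim_shift: "filterlim (\<lambda>n. f (n + k)) F sequentially \<longleftrightarrow> filterlim f F sequentially"
proof (induction k)
  case 0 then show ?case by simp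
next
  case (Suc k)
  have "filterlim (\<lambda>n. f (n + Suc k)) F sequentially \<longleftrightarrow> filterlim (\<lambda>n. f (Suc n + k)) F sequentially" by simp
  also have "\<dots> \<longleftrightarrow> filterlim (\<lambda>n. f (n + k)) F sequentially"
    by (rule filterlim_sequentially_Suc)
  finally show ?case using Suc by simp
qed

lemma filterlim_at_bot_add_const: "filterlim (\<lambda>k. c + g k :: real) at_bot F \<longleftrightarrow> filterlim g at_bot F"
proof
  assume H: "filterlim (\<lambda>k. c + g k) at_bot F"
  show "filterlim g at_bot F" unfolding filterlim_at_bot
  proof
    fix Z
    from H have "\<forall>Z. eventually (\<lambda>k. c + g k \<le> Z) F" by (simp add: filterlim_at_bot)
    then have "eventually (\<lambda>k. c + g k \<le> Z + c) F" by blast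
    then show "eventually (\<lambda>k. g k \<le> Z) F" by (rule eventually_mono) simp
  qed
next
  assume H: "filterlim g at_bot F"
  show "filterlim (\<lambda>k. c + g k) at_bot F" unfolding filterlim_at_bot
  proof
    fix Z
    from H have "eventually (\<lambda>k. g k \<le> Z - c) F" by (simp add: filterlim_at_bot)
    then show "eventually (\<lambda>k. c + g k \<le> Z) F" by (rule eventually_mono) simp
  qed
qed

definition srw :: "(nat \<Rightarrow> bool) \<Rightarrow> nat \<Rightarrow> real" where
  "srw \<omega> n = (\<Sum>k<n. if \<omega> k then -1 else 1)"

lemma srw_meas: "(\<lambda>\<omega>. srw \<omega> n) \<in> borel_measurable coins"
  unfolding srw_def by measurable

definition sh :: "nat \<Rightarrow> (nat \<Rightarrow> bool) \<Rightarrow> (nat \<Rightarrow> bool)" where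
  "sh n \<omega> = (\<lambda>k. \<omega> (k + n))"

lemma srw_add: "srw \<omega> (k + n) = srw \<omega> n + srw (sh n \<omega>) k"
  by (induction k) (simp_all add: srw_def sh_def add.commute)

definition Xm where "Xm = {\<omega> \<in> space coins. filterlim (srw \<omega>) at_bot sequentially}"
definition Xp where "Xp = {\<omega> \<in> space coins. filterlim (srw \<omega>) at_top sequentially}"

lemma Xm_sets: "Xm \<in> sets coins" unfolding Xm_def by (rule meas_at_bot[OF srw_meas])
lemma Xp_sets: "Xp \<in> sets coins" unfolding Xp_def by (rule meas_at_top[OF srw_meas])

lemma Xm_shift: "sh n -` Xm = Xm"
proof -
  have "filterlim (srw \<omega>) at_bot sequentially \<longleftrightarrow> filterlim (srw (sh n \<omega>)) at_bot sequentially" for \<omega>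
  proof -
    have "filterlim (srw \<omega>) at_bot sequentially \<longleftrightarrow> filterlim (\<lambda>k. srw \<omega> (k + n)) at_bot sequentially"
      by (rule filterlim_shift[symmetric])
    also have "\<dots> \<longleftrightarrow> filterlim (\<lambda>k. srw \<omega> n + srw (sh n \<omega>) k) at_bot sequentially"
      by (simp add: srw_add)
    also have "\<dots> \<longleftrightarrow> filterlim (srw (sh n \<omega>)) at_bot sequentially"
      by (rule filterlim_at_bot_add_const)
    finally show ?thesis .
  qed
  then show ?thesis by (auto simp: Xm_def)
qed

definition Asig :: "nat \<Rightarrow> (nat \<Rightarrow> bool) set set" where
  "Asig i = sigma_sets (space coins) {(\<lambda>\<omega>. \<omega> i) -` A \<inter> space coins | A. A \<in> sets B}"

lemma indep_coords: "prob_space.indep_vars coins (\<lambda>_. B) (\<lambda>i \<omega>. \<omega> i) UNIV"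
proof -
  interpret P: prob_space coins by (rule prob_coins)
  have rv: "\<And>i. P.random_variable B (\<lambda>\<omega>. \<omega> i)"
    unfolding coins_def by (rule measurable_component_singleton) simp
  have r: "(\<lambda>x. \<lambda>i\<in>UNIV. x i) = (\<lambda>x. x)" by (simp add: fun_eq_iff)
  show ?thesis
    by (subst P.indep_vars_iff_distr_eq_PiM[OF _ rv]) (simp_all add: r coins_def C.PiM_component)
qed

lemma indep_Asig: "prob_space.indep_sets coins Asig UNIV"
  using indep_coords unfolding prob_space.indep_vars_def[OF prob_coins] Asig_def by simp

lemma sigma_Asig: "sigma_algebra (space coins) (Asig i)"
  unfolding Asig_def by (rule sigma_algebra_sigma_sets) auto

lemma shift_tail:
  assumes Y: "Y \<in> sets coins"
  shows "sh n -` Y \<in> sigma_sets (space coins) (\<Union> (Asig ` {n..}))"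
proof -
  define G where "G = {{f\<in>\<Pi>\<^sub>E i\<in>(UNIV::nat set). space B. f i \<in> A} | i A. i \<in> (UNIV::nat set) \<and> A \<in> sets B}"
  have sp: "(\<Pi>\<^sub>E i\<in>(UNIV::nat set). space B) = UNIV" by simp
  have "Y \<in> sigma_sets UNIV G"
    using Y unfolding coins_def sets_PiM_single G_def sp by simp
  then have "sh n -` Y \<inter> UNIV \<in> {sh n -` A \<inter> UNIV | A. A \<in> sigma_sets UNIV G}" by blast
  also have "\<dots> = sigma_sets UNIV {sh n -` A \<inter> UNIV | A. A \<in> G}"
    by (rule sigma_sets_vimage_commute) simp
  also have "\<dots> \<subseteq> sigma_sets UNIV (\<Union> (Asig ` {n..}))"
  proof (rule sigma_sets_mono')
    show "{sh n -` A \<inter> UNIV | A. A \<in> G} \<subseteq> \<Union> (Asig ` {n..})"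
    proof
      fix S assume "S \<in> {sh n -` A \<inter> UNIV | A. A \<in> G}"
      then obtain i A where S: "S = sh n -` {f. f i \<in> A}" unfolding G_def by auto
      have "S = (\<lambda>\<omega>. \<omega> (i+n)) -` A \<inter> space coins" unfolding S by (auto simp: sh_def)
      then have "S \<in> Asig (i+n)" unfolding Asig_def by (intro sigma_sets.Basic) auto
      then show "S \<in> \<Union> (Asig ` {n..})" by auto
    qed
  qed
  finally show ?thesis by simp
qed

lemma Xm_tail: "Xm \<in> prob_space.tail_events coins Asig"
  unfolding prob_space.tail_events_def[OF prob_coins]
  using shift_tail[OF Xm_sets] by (simp add: Xm_shift)

lemma Xm_01: "measure coins Xm = 0 \<or> measure coins Xm = 1"
  by (rule prob_space.kolmogorov_0_1_law[OF prob_coins sigma_Asig indep_Asig Xm_tail])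



definition flip :: "(nat \<Rightarrow> bool) \<Rightarrow> (nat \<Rightarrow> bool)" where "flip \<omega> = (\<lambda>k. \<not> \<omega> k)"

lemma flip_meas: "flip \<in> measurable coins coins"
proof -
  have N: "Not \<in> measurable B B" by (auto simp: measurable_def)
  have M: "(\<lambda>\<omega> i. \<not> \<omega> i) \<in> measurable (PiM UNIV (\<lambda>_. B)) (PiM UNIV (\<lambda>_. B))"
    apply (rule measurable_PiM_single')
    using measurable_compose[OF measurable_component_singleton[of _ UNIV "\<lambda>_. B"] N]
    by (auto simp: space_PiM)
  have eq: "flip = (\<lambda>\<omega> i. \<not> \<omega> i)" by (simp add: flip_def[abs_def])
  show ?thesis unfolding coins_def eq by (rule M)
qed

lemma emeasure_B_Not: "emeasure B (Not -` S) = emeasure B S"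
proof -
  have c: "card (Not -` S) = card S" by (rule card_vimage_inj) (auto simp: inj_def)
  have "emeasure B (Not -` S) = ennreal (\<Sum>s\<in>Not -` S. pmf (bernoulli_pmf (1/2)) s)"
    by (rule emeasure_measure_pmf_finite) simp
  also have "\<dots> = ennreal (real (card (Not -` S)) * (1/2))" by simp
  also have "\<dots> = ennreal (real (card S) * (1/2))" by (simp only: c)
  also have "\<dots> = ennreal (\<Sum>s\<in>S. pmf (bernoulli_pmf (1/2)) s)" by simp
  also have "\<dots> = emeasure B S"
    by (rule emeasure_measure_pmf_finite[symmetric]) simp
  finally show ?thesis .
qed

lemma coins_flip: "distr coins coins flip = coins"
proof -
  have "distr C.S C.S flip = C.S"
  proof (rule C.PiM_eq)
    show "sets (distr C.S C.S flip) = sets C.S" by simp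
  next
    fix J F assume J: "finite J" "J \<subseteq> (UNIV::nat set)" "\<And>j. j \<in> J \<Longrightarrow> F j \<in> sets B"
    have pre: "flip -` prod_emb UNIV (\<lambda>_. B) J (PiE J F) \<inter> space C.S = prod_emb UNIV (\<lambda>_. B) J (PiE J (\<lambda>j. Not -` F j))"
    proof (rule set_eqI)
      fix \<omega> :: "nat \<Rightarrow> bool"
      show "\<omega> \<in> flip -` prod_emb UNIV (\<lambda>_. B) J (PiE J F) \<inter> space C.S \<longleftrightarrow> \<omega> \<in> prod_emb UNIV (\<lambda>_. B) J (PiE J (\<lambda>j. Not -` F j))"
        by (simp only: prod_emb_iff restrict_PiE_iff vimage_eq Int_iff) (simp add: flip_def space_PiM)
    qed
    have "emeasure (distr C.S C.S flip) (prod_emb UNIV (\<lambda>_. B) J (PiE J F)) = emeasure C.S (flip -` prod_emb UNIV (\<lambda>_. B) J (PiE J F) \<inter> space C.S)"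
      by (rule emeasure_distr) (use flip_meas J in \<open>auto simp: coins_def intro!: sets_PiM_I_finite\<close>)
    also have "\<dots> = (\<Prod>j\<in>J. emeasure B (Not -` F j))"
      unfolding pre by (rule C.emeasure_PiM_emb) (use J in auto)
    also have "\<dots> = (\<Prod>j\<in>J. emeasure B (F j))" by (simp add: emeasure_B_Not)
    finally show "emeasure (distr C.S C.S flip) (prod_emb UNIV (\<lambda>_. B) J (PiE J F)) = (\<Prod>j\<in>J. emeasure B (F j))" .
  qed
  then show ?thesis by (simp add: coins_def)
qed

lemma srw_flip: "srw (flip \<omega>) n = - srw \<omega> n"
proof -
  have "(\<Sum>k<n. if flip \<omega> k then -1 else 1) = (\<Sum>k<n. - (if \<omega> k then -1 else (1::real)))"
    by (rule sum.cong) (auto simp: flip_def)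
  then show ?thesis by (simp add: srw_def sum_negf)
qed

lemma flip_Xm: "flip -` Xm \<inter> space coins = Xp"
proof -
  have "filterlim (srw (flip \<omega>)) at_bot sequentially \<longleftrightarrow> filterlim (srw \<omega>) at_top sequentially" for \<omega>
    using filterlim_uminus_at_top[of "srw \<omega>" sequentially] by (simp add: srw_flip[abs_def])
  then show ?thesis by (auto simp: Xm_def Xp_def)
qed

lemma Xm_Xp_disj: "Xm \<inter> Xp = {}"
proof -
  have False if "filterlim f at_bot sequentially" "filterlim f at_top sequentially" for f :: "nat \<Rightarrow> real"
  proof -
    have "eventually (\<lambda>n. f n \<le> 0) sequentially" using that(1) by (simp add: filterlim_at_bot)
    moreover have "eventually (\<lambda>n. 1 \<le> f n) sequentially" using that(2) by (simp add: filterlim_at_top)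
    ultimately have "eventually (\<lambda>n. False) sequentially" by eventually_elim simp
    then show False by simp
  qed
  then show ?thesis by (auto simp: Xm_def Xp_def)
qed

lemma Xm_Xp_zero: "measure coins Xm = 0 \<and> measure coins Xp = 0"
proof -
  interpret P: prob_space coins by (rule prob_coins)
  have eq: "measure coins Xp = measure coins Xm"
  proof -
    have "measure coins Xm = measure (distr coins coins flip) Xm" by (simp add: coins_flip)
    also have "\<dots> = measure coins (flip -` Xm \<inter> space coins)"
      by (rule measure_distr[OF flip_meas Xm_sets])
    finally show ?thesis using flip_Xm by simp
  qed
  have "measure coins Xm + measure coins Xp = measure coins (Xm \<union> Xp)"
    by (rule P.finite_measure_Union[symmetric, OF Xm_sets Xp_sets Xm_Xp_disj])
  also have "\<dots> \<le> 1" by simp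
  finally have le: "measure coins Xm + measure coins Xp \<le> 1" .
  from Xm_01 le eq show ?thesis by auto
qed

lemma inv_f1: "inv f1 = (\<lambda>y. if y < 1 then y - 1 else (y - 1)/2)"
  by (rule inv_equality) (auto simp: f1_def field_simps)

lemma inv_f2: "inv f2 = (\<lambda>y. y + 1)"
  by (rule inv_equality) (auto simp: f2_def)

lemma Inv_Suc: "Inv \<omega> (Suc n) x = (if \<omega> n then (\<lambda>y. if y < 1 then y - 1 else (y - 1)/2) else (\<lambda>y. y + 1)) (Inv \<omega> n x)"
  by (simp add: Inv_def inv_f1 inv_f2)

lemma srw_Suc: "srw \<omega> (Suc n) = srw \<omega> n + (if \<omega> n then -1 else 1)"
  by (simp add: srw_def)

lemma Inv_le: "Inv \<omega> n x \<le> x + srw \<omega> n"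
proof (induction n)
  case 0 then show ?case by (simp add: Inv_def srw_def)
next
  case (Suc n)
  show ?case unfolding Inv_Suc srw_Suc using Suc by auto
qed

lemma Inv_bot:
  assumes H: "filterlim (\<lambda>n. Inv \<omega> n x) at_bot sequentially"
  shows "filterlim (srw \<omega>) at_bot sequentially"
proof -
  have "eventually (\<lambda>n. Inv \<omega> n x \<le> 0) sequentially" using H by (simp add: filterlim_at_bot)
  then obtain N where N: "\<And>n. n \<ge> N \<Longrightarrow> Inv \<omega> n x \<le> 0" by (auto simp: eventually_sequentially)
  have eq: "Inv \<omega> (k + N) x = Inv \<omega> N x + srw \<omega> (k + N) - srw \<omega> N" for k
  proof (induction k)
    case 0 then show ?case by simp
  next
    case (Suc k)
    have "Inv \<omega> (k + N) x < 1" using N[of "k+N"] by simp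
    then show ?case using Suc by (simp add: Inv_Suc srw_Suc)
  qed
  have "filterlim (\<lambda>k. Inv \<omega> (k + N) x) at_bot sequentially"
    using H filterlim_shift[of "\<lambda>n. Inv \<omega> n x" N] by simp
  then have "filterlim (\<lambda>k. (srw \<omega> N - Inv \<omega> N x) + Inv \<omega> (k + N) x) at_bot sequentially"
    by (simp only: filterlim_at_bot_add_const)
  then have "filterlim (\<lambda>k. srw \<omega> (k + N)) at_bot sequentially"
    by (simp add: eq)
  then show ?thesis using filterlim_shift[of "srw \<omega>" N] by simp
qed

lemma null_subset:
  assumes "S \<subseteq> T" "T \<in> sets coins" "measure coins T = 0"
  shows "measure coins S = 0"
proof (cases "S \<in> sets coins")
  case True
  interpret P: prob_space coins by (rule prob_coins)
  have "measure coins S \<le> measure coins T" by (rule P.finite_measure_mono[OF assms(1,2)])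
  then show ?thesis using assms(3) measure_nonneg[of coins S] by simp
next
  case False
  then show ?thesis by (simp add: measure_notin_sets)
qed

lemma phi0_hat_one: "phi0_hat x = 1"
proof -
  have a: "measure coins {\<omega> \<in> space coins. filterlim (\<lambda>n. Inv \<omega> n x) at_top sequentially} = 0"
  proof (rule null_subset[OF _ Xp_sets])
    show "measure coins Xp = 0" using Xm_Xp_zero by simp
    show "{\<omega> \<in> space coins. filterlim (\<lambda>n. Inv \<omega> n x) at_top sequentially} \<subseteq> Xp"
    proof safe
      fix \<omega> assume "filterlim (\<lambda>n. Inv \<omega> n x) at_top sequentially"
      then have "filterlim (\<lambda>n. x + srw \<omega> n) at_top sequentially"
        by (rule filterlim_at_top_mono) (simp add: Inv_le)
      then have "filterlim (\<lambda>n. (- x) + (x + srw \<omega> n)) at_top sequentially"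
        by (rule filterlim_tendsto_add_at_top[OF tendsto_const])
      then show "\<omega> \<in> Xp" by (simp add: Xp_def)
    qed
  qed
  have b: "measure coins {\<omega> \<in> space coins. filterlim (\<lambda>n. Inv \<omega> n x) at_bot sequentially} = 0"
  proof (rule null_subset[OF _ Xm_sets])
    show "measure coins Xm = 0" using Xm_Xp_zero by simp
    show "{\<omega> \<in> space coins. filterlim (\<lambda>n. Inv \<omega> n x) at_bot sequentially} \<subseteq> Xm"
      by (auto simp: Xm_def intro: Inv_bot)
  qed
  show ?thesis unfolding phi0_hat_def a b by simp
qed


theorem mainTheorem10:
  shows "(\<forall>x. phi_plus x = 1) \<and> (\<forall>x. phi0_hat x = 1)"
  by (simp add: phi_plus_one phi0_hat_one)

end
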